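(* For every integer $B>2$ and every $\varepsilon\in[0,1]$, $$M_B(\varepsilon\mid\mathrm{JamesStein})\le\varepsilon+\frac2B.$$
   Context: The positive-part James–Stein denoiser on $\mathbb R^B$ is $\eta^{JS}(y)=\big(1-(B-2)/\|y\|_2^2\big)_+\,y$. Let $\mathcal F_{\varepsilon,B}=\{\nu\in\mathcal P(\mathbb R^B):\nu(\{0\})\ge1-\varepsilon\}$ and $$M_B(\varepsilon\mid\mathrm{JamesStein})=\frac1B\sup_{\nu\in\mathcal F_{\varepsilon,B}}\mathbb E_\nu\|\mathbf X-\eta^{JS}(\mathbf X+\mathbf Z)\|_2^2,$$ with $\mathbf X\sim\nu$ independent of $\mathbf Z\sim\mathsf N(0,I_{B\times B})$. *)

theory Defs
  imports "HOL-Probability.Probability"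
begin

text \<open>Dimension B is CARD('n); vectors in R^B are of type real^'n.\<close>

definition james_stein :: "real^'n \<Rightarrow> real^'n" where
  "james_stein y = max 0 (1 - (real CARD('n) - 2) / (norm y)^2) *\<^sub>R y"

definition std_gauss :: "(real^'n) measure" where
  "std_gauss = density lborel
     (\<lambda>z. ennreal ((2 * pi) powr (- real CARD('n) / 2) * exp (- ((norm z)\<^sup>2) / 2)))"

definition sparse_priors :: "real \<Rightarrow> (real^'n::finite) measure set" where
  "sparse_priors eps = {\<nu>. prob_space \<nu> \<and> sets \<nu> = sets borel \<and> measure \<nu> {0} \<ge> 1 - eps}"

definition js_risk :: "(real^'n::finite) measure \<Rightarrow> ennreal" where
  "js_risk \<nu> = (\<integral>\<^sup>+ x. (\<integral>\<^sup>+ z. ennreal ((norm (x - james_stein (x + z)))^2) \<partial>std_gauss) \<partial>\<nu>)"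

definition minimax_JS :: "real \<Rightarrow> 'n::finite itself \<Rightarrow> ennreal" where
  "minimax_JS eps _ = ennreal (1 / real CARD('n)) * (SUP \<nu>\<in>(sparse_priors eps :: (real^'n) measure set). js_risk \<nu>)"

end

theory Submission
  imports Defs
begin


lemma norm_sq_Basis: "(norm (y::'a::euclidean_space))^2 = (\<Sum>b\<in>Basis. (y \<bullet> b)^2)"
  unfolding power2_norm_eq_inner by (subst euclidean_inner) (simp add: power2_eq_square)

lemma gauss_prod:
  fixes x y :: "'a::euclidean_space" assumes "\<sigma> > 0"
  shows "(\<Prod>b\<in>Basis. normal_density (x\<bullet>b) \<sigma> (y\<bullet>b)) =
     (1/sqrt(2 * pi * \<sigma>^2))^DIM('a)  *  exp(- ((norm (y - x))^2)/(2 * \<sigma>^2))"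
proof -
  have "(\<Prod>b\<in>Basis. normal_density (x\<bullet>b) \<sigma> (y\<bullet>b)) =
     (1/sqrt(2 * pi * \<sigma>^2))^DIM('a)  *  (\<Prod>b\<in>Basis. exp (- (((y-x)\<bullet>b)^2)/(2 * \<sigma>^2)))"
    by (simp only: normal_density_def inner_diff_left prod.distrib prod_constant)
  also have "(\<Prod>b\<in>Basis. exp (- (((y-x)\<bullet>b)^2)/(2 * \<sigma>^2))) = exp (\<Sum>b\<in>Basis. - (((y-x)\<bullet>b)^2)/(2 * \<sigma>^2))"
    by (simp add: exp_sum)
  also have "(\<Sum>b\<in>Basis. - (((y-x)\<bullet>b)^2)/(2 * \<sigma>^2)) = - ((norm (y - x))^2)/(2 * \<sigma>^2)"
    by (simp add: norm_sq_Basis[of "y-x"] sum_divide_distrib sum_negf)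
  finally show ?thesis by simp
qed

lemma gauss_nn:
  fixes x :: "'a::euclidean_space" assumes "\<sigma> > 0"
  shows "(\<integral>\<^sup>+y. ennreal ((1/sqrt(2 * pi * \<sigma>^2))^DIM('a)  *  exp(- ((norm (y - x))^2)/(2 * \<sigma>^2))) \<partial>lborel) = 1"
proof -
  have "(\<integral>\<^sup>+y. ennreal ((1/sqrt(2 * pi * \<sigma>^2))^DIM('a)  *  exp(- ((norm (y - x))^2)/(2 * \<sigma>^2))) \<partial>lborel)
     = (\<integral>\<^sup>+y. (\<Prod>b\<in>Basis. ennreal (normal_density (x\<bullet>b) \<sigma> (y\<bullet>b))) \<partial>lborel)"
    by (simp add: gauss_prod[OF assms] prod_ennreal)
  also have "\<dots> = (\<Prod>b\<in>(Basis::'a set). (\<integral>\<^sup>+s. ennreal (normal_density (x\<bullet>b) \<sigma> s) \<partial>lborel))"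
    by (rule nn_integral_lborel_prod) auto
  also have "\<dots> = 1"
  proof (rule prod.neutral, intro ballI)
    fix b :: 'a
    show "(\<integral>\<^sup>+s. ennreal (normal_density (x\<bullet>b) \<sigma> s) \<partial>lborel) = 1"
      using prob_space_normal_density[OF assms, of "x\<bullet>b"]
      by (simp add: prob_space_def prob_space_axioms_def emeasure_density)  
  qed
  finally show ?thesis .
qed

lemma gauss_integrable:
  fixes x :: "'a::euclidean_space" assumes "\<sigma> > 0"
  shows "integrable lborel (\<lambda>y. exp (- ((norm (y - x))^2) / (2 * \<sigma>^2)))"
proof (rule integrableI_bounded)
  define K where "K = (1/sqrt(2 * pi * \<sigma>^2))^DIM('a)"
  have K: "K > 0" using assms by (simp add: K_def)
  have "(\<integral>\<^sup>+y. ennreal (norm (exp (- ((norm (y - x))^2) / (2 * \<sigma>^2)))) \<partial>lborel)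
      = (\<integral>\<^sup>+y. ennreal (1/K) * ennreal (K * exp (- ((norm (y - x))^2) / (2 * \<sigma>^2))) \<partial>lborel)"
    using K by (intro nn_integral_cong) (simp add: ennreal_mult[symmetric])
  also have "\<dots> = ennreal (1/K) * 1"
    using gauss_nn[OF assms, of x] by (subst nn_integral_cmult) (auto simp: K_def)
  finally show "(\<integral>\<^sup>+y. ennreal (norm (exp (- ((norm (y - x))^2) / (2 * \<sigma>^2)))) \<partial>lborel) < \<infinity>"
    by simp
qed simp

lemma gauss_integral:
  fixes x :: "'a::euclidean_space" assumes "\<sigma> > 0"
  shows "(\<integral>y. (1/sqrt(2 * pi * \<sigma>^2))^DIM('a) * exp (- ((norm (y - x))^2) / (2 * \<sigma>^2)) \<partial>lborel) = 1"
proof -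
  have "ennreal (\<integral>y. (1/sqrt(2 * pi * \<sigma>^2))^DIM('a) * exp (- ((norm (y - x))^2) / (2 * \<sigma>^2)) \<partial>lborel) = 1"
    using gauss_nn[OF assms, of x] gauss_integrable[OF assms, of x] assms
    by (subst nn_integral_eq_integral[symmetric]) auto
  then show ?thesis by simp
qed

lemma dom_int:
  fixes h :: "'a::euclidean_space \<Rightarrow> real"
  assumes [measurable]: "h \<in> borel_measurable borel"
    and b: "\<And>y. \<bar>h y\<bar> \<le> A * (1 + (norm y)^2) * exp (- ((norm y)^2) / 4)"
  shows "integrable lborel h"
proof (rule Bochner_Integration.integrable_bound)
  show "integrable lborel (\<lambda>y::'a. 8 * A * exp (- ((norm (y - 0))^2) / (2 * 2^2)))"
    using gauss_integrable[of 2 "0::'a"] by (intro integrable_mult_right) simp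
  show "AE y in lborel. norm (h y) \<le> norm (8 * A * exp (- ((norm (y - 0))^2) / (2 * 2^2)))"
  proof (intro AE_I2)
    fix y :: 'a
    define u where "u = (norm y)^2"
    have p: "0 < (1 + (norm y)^2) * exp (- ((norm y)^2) / 4)" by (simp add: add_pos_nonneg)
    have "0 \<le> A * ((1 + (norm y)^2) * exp (- ((norm y)^2) / 4))"
      using b[of y] by (metis abs_ge_zero order_trans mult.assoc)
    then have A: "A \<ge> 0" using p by (simp add: zero_le_mult_iff)
    have "1 + u \<le> 8 * exp (u/8)" using exp_ge_add_one_self[of "u/8"] zero_le_power2[of "norm y"] unfolding u_def by linarith
    then have "(1 + u) * exp (- u / 4) \<le> 8 * exp (u/8) * exp (- u/4)" by simp
    also have "\<dots> = 8 * exp (- u / 8)" by (simp add: exp_add[symmetric])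
    finally have "A * ((1 + u) * exp (- u / 4)) \<le> A * (8 * exp (- u / 8))"
      using A by (intro mult_left_mono) auto
    then show "norm (h y) \<le> norm (8 * A * exp (- ((norm (y - 0))^2) / (2 * 2^2)))"
      using b[of y] A by (simp add: u_def mult.assoc)
  qed
qed simp

lemma integral_scale:
  fixes f :: "'a::euclidean_space \<Rightarrow> real"
  assumes [measurable]: "f \<in> borel_measurable borel" and c: "c > 0"
  shows "(\<integral>y. f y \<partial>lborel) = c^DIM('a) * (\<integral>y. f (c *\<^sub>R y) \<partial>lborel)"
proof -
  have "(\<integral>y. f y \<partial>lborel) = (\<integral>y. f y \<partial>density (distr lborel borel (\<lambda>x. 0 + c *\<^sub>R x)) (\<lambda>_. ennreal (\<bar>c\<bar>^DIM('a))))"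
    using lborel_affine[of c "0::'a"] c by simp
  also have "\<dots> = (\<integral>y. \<bar>c\<bar>^DIM('a) * f y \<partial>distr lborel borel (\<lambda>x. 0 + c *\<^sub>R x))"
    by (subst integral_density) auto
  also have "\<dots> = (\<integral>y. \<bar>c\<bar>^DIM('a) * f (0 + c *\<^sub>R y) \<partial>lborel)"
    by (subst integral_distr) auto
  finally show ?thesis using c by simp
qed

lemma integral_shift:
  fixes f :: "'a::euclidean_space \<Rightarrow> real"
  assumes [measurable]: "f \<in> borel_measurable borel"
  shows "(\<integral>y. f y \<partial>lborel) = (\<integral>y. f (t + y) \<partial>lborel)"
proof -
  have "(\<integral>y. f y \<partial>lborel) = (\<integral>y. f y \<partial>density (distr lborel borel (\<lambda>x. t + 1 *\<^sub>R x)) (\<lambda>_. ennreal (\<bar>1\<bar>^DIM('a))))"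
    using lborel_affine[of 1 "t::'a"] by simp
  also have "\<dots> = (\<integral>y. f y \<partial>distr lborel borel (\<lambda>x. t + 1 *\<^sub>R x))"
    by (subst integral_density) auto
  also have "\<dots> = (\<integral>y. f (t + y) \<partial>lborel)"
    by (subst integral_distr) auto
  finally show ?thesis .
qed

lemma nn_integral_shift:
  fixes f :: "'a::euclidean_space \<Rightarrow> ennreal"
  assumes [measurable]: "f \<in> borel_measurable borel"
  shows "(\<integral>\<^sup>+y. f y \<partial>lborel) = (\<integral>\<^sup>+y. f (t + y) \<partial>lborel)"
proof -
  have "(\<integral>\<^sup>+y. f y \<partial>lborel) = (\<integral>\<^sup>+y. f y \<partial>density (distr lborel borel (\<lambda>x. t + 1 *\<^sub>R x)) (\<lambda>_. ennreal (\<bar>1\<bar>^DIM('a))))"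
    using lborel_affine[of 1 "t::'a"] by simp
  also have "\<dots> = (\<integral>\<^sup>+y. f (t + y) \<partial>lborel)"
    by (simp add: nn_integral_density nn_integral_distr)
  finally show ?thesis .
qed

lemma exp_diff_bound: "\<bar>exp (- (a::real)) - exp (- b)\<bar> \<le> \<bar>a - b\<bar> * exp (- min a b)"
proof -
  have *: "exp (- a) - exp (- b) \<le> (b - a) * exp (- a)" if "a \<le> b" for a b :: real
  proof -
    have "exp (- b) = exp (- a) * exp (- (b - a))" by (simp add: exp_add[symmetric])
    moreover have "1 - (b - a) \<le> exp (- (b - a))" using exp_ge_add_one_self[of "a - b"] by (simp only: minus_diff_eq)
    ultimately have "exp (- b) \<ge> exp (- a) * (1 - (b - a))" by (simp add: mult_left_mono)
    then show ?thesis by (simp add: algebra_simps)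
  qed
  show ?thesis
  proof (cases "a \<le> b")
    case True
    then have "exp (- b) \<le> exp (- a)" by (subst exp_le_cancel_iff) simp
    then have "\<bar>exp (- a) - exp (- b)\<bar> = exp (- a) - exp (- b)" by simp
    moreover have "\<bar>a - b\<bar> * exp (- min a b) = (b - a) * exp (- a)" using True by (simp add: min_def)
    ultimately show ?thesis using *[OF True] by simp
  next
    case False
    then have F: "b \<le> a" by simp
    then have "exp (- a) \<le> exp (- b)" by (subst exp_le_cancel_iff) simp
    then have "\<bar>exp (- a) - exp (- b)\<bar> = exp (- b) - exp (- a)" by simp
    moreover have "\<bar>a - b\<bar> * exp (- min a b) = (a - b) * exp (- b)" using F by (simp add: min_def)
    ultimately show ?thesis using *[OF F] by simp
  qed
qed

lemma norm_sq_half: "(norm (p::'a::real_normed_vector))^2 / 2 - (norm q)^2 \<le> (norm (p - q))^2"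
proof -
  have "norm p \<le> norm (p - q) + norm q" by (metis norm_triangle_sub add.commute)
  then have "(norm p)^2 \<le> (norm (p - q) + norm q)^2" by (simp add: power_mono)
  also have "\<dots> \<le> 2 * (norm (p - q))^2 + 2 * (norm q)^2"
    using zero_le_power2[of "norm (p - q) - norm q"] unfolding power2_sum power2_diff by linarith
  finally show ?thesis by simp
qed

lemma psi_bound:
  fixes x y :: "'a::real_normed_vector" assumes "\<mu> \<ge> 1"
  shows "exp (- ((norm (\<mu> *\<^sub>R y - x))^2) / 2) \<le> exp ((norm x)^2 / 2) * exp (- ((norm y)^2) / 4)"
proof -
  have "(norm y)^2 \<le> (norm (\<mu> *\<^sub>R y))^2"
    using assms by (simp add: power_mono abs_if mult_le_cancel_right1 power_mult_distrib)
  then have "(norm y)^2 / 2 - (norm x)^2 \<le> (norm (\<mu> *\<^sub>R y - x))^2"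
    using norm_sq_half[of "\<mu> *\<^sub>R y" x] by linarith
  then have "- ((norm (\<mu> *\<^sub>R y - x))^2) / 2 \<le> (norm x)^2 / 2 + (- ((norm y)^2) / 4)" by linarith
  then show ?thesis by (simp add: exp_add[symmetric])
qed

lemma deriv_seq:
  assumes "(f has_real_derivative d) (at a)"
  shows "(\<lambda>n. (f (a + 1 / real (Suc n)) - f a) / (1 / real (Suc n))) \<longlonglongrightarrow> d"
proof -
  have lim: "((\<lambda>h. (f (a + h) - f a) / h) \<longlongrightarrow> d) (at 0)"
    using assms by (simp add: DERIV_def)
  have seq: "(\<lambda>n. 1 / real (Suc n)) \<longlonglongrightarrow> 0" by (rule LIMSEQ_Suc[OF lim_const_over_n])
  have "\<forall>X. (\<forall>i. X i \<noteq> 0) \<longrightarrow> X \<longlonglongrightarrow> 0 \<longrightarrow> (\<lambda>n. (f (a + X n) - f a) / X n) \<longlonglongrightarrow> d"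
    using lim unfolding tendsto_at_iff_sequentially[where s=UNIV] by (auto simp: o_def)
  from this[rule_format, of "\<lambda>n. 1 / real (Suc n)"] seq show ?thesis by simp
qed

lemma AE_not_sphere: "AE y in lborel. norm (y::'a::euclidean_space) \<noteq> r"
proof -
  from negligible_sphere[of "0::'a" r] have N: "sphere (0::'a) r \<in> null_sets lborel"
    by (auto simp: null_sets_completion_iff negligible_iff_null_sets negligible_convex_frontier)
  show ?thesis by (rule AE_I'[OF N]) auto
qed

lemma norm_scale_diff_sq:
  fixes x y :: "'a::real_inner"
  shows "(norm (r *\<^sub>R y - x))^2 = r^2 * (norm y)^2 - 2 * r * (x \<bullet> y) + (norm x)^2"
  unfolding power2_norm_eq_inner by (simp add: inner_diff_left inner_diff_right inner_commute power2_eq_square algebra_simps)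

lemma stein_scale:
  fixes x :: "'a::euclidean_space" and t tp :: "real \<Rightarrow> real"
  assumes tm[measurable]: "t \<in> borel_measurable borel" and tpm[measurable]: "tp \<in> borel_measurable borel"
    and c: "c > 0"
    and t01: "\<And>u. 0 \<le> u \<Longrightarrow> 0 \<le> t u \<and> t u \<le> 1"
    and tlip: "\<And>u v. 0 < u \<Longrightarrow> u \<le> v \<Longrightarrow> \<bar>t v - t u\<bar> \<le> (v - u) / v"
    and tder: "\<And>u. 0 < u \<Longrightarrow> u \<noteq> c \<Longrightarrow> (t has_real_derivative tp u) (at u)"
    and tpb: "\<And>u. 0 \<le> u \<Longrightarrow> \<bar>u * tp u\<bar> \<le> 1"
  shows "(\<integral>y. t ((norm y)^2) * (y \<bullet> (y - x)) * exp (- ((norm (y - x))^2) / 2) \<partial>lborel) =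
         (\<integral>y. (DIM('a) * t ((norm y)^2) + 2 * (norm y)^2 * tp ((norm y)^2)) * exp (- ((norm (y - x))^2) / 2) \<partial>lborel)"
proof -
  define \<psi> where "\<psi> y = exp (- ((norm (y - x))^2) / 2)" for y :: 'a
  define \<Phi> where "\<Phi> y = t ((norm y)^2) * \<psi> y" for y :: 'a
  define E0 where "E0 = exp ((norm x)^2 / 2)"
  define A where "A = E0 * (3 + (norm x)^2)"
  define W where "W y = A * (1 + (norm y)^2) * exp (- ((norm y)^2) / 4)" for y :: 'a
  define L where "L y = 2 * (norm y)^2 * tp ((norm y)^2) * \<psi> y - t ((norm y)^2) * (y \<bullet> (y - x)) * \<psi> y" for y :: 'a
  define lam where "lam n = 1 + 1 / real (Suc n)" for n :: nat
  define Q where "Q n y = (\<Phi> (lam n *\<^sub>R y) - \<Phi> y) / (1 / real (Suc n))" for n y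
  have E0: "E0 > 0" by (simp add: E0_def)
  have A: "A > 0" using E0 by (simp add: A_def add_pos_nonneg)
  have [measurable]: "\<psi> \<in> borel_measurable borel" "\<Phi> \<in> borel_measurable borel" "L \<in> borel_measurable borel"
    "W \<in> borel_measurable borel"
    unfolding \<psi>_def[abs_def] \<Phi>_def[abs_def] L_def[abs_def] W_def[abs_def] by measurable
  have [measurable]: "Q n \<in> borel_measurable borel" for n
    unfolding Q_def[abs_def] by measurable
  have psi_pos: "\<psi> y > 0" for y by (simp add: \<psi>_def)
  have psiB: "\<psi> (\<mu> *\<^sub>R y) \<le> E0 * exp (- ((norm y)^2) / 4)" if "\<mu> \<ge> 1" for \<mu> y
    using psi_bound[OF that, of y x] by (simp add: \<psi>_def E0_def)
  have psiB1: "\<psi> y \<le> E0 * exp (- ((norm y)^2) / 4)" for y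
    using psiB[of 1 y] by simp
  have lam1: "lam n \<ge> 1" for n by (simp add: lam_def)
  have intW: "integrable lborel W"
    by (rule dom_int[where A=A]) (use A in \<open>auto simp: W_def abs_mult\<close>)
  have intPhi_s: "integrable lborel (\<lambda>y. \<Phi> (\<mu> *\<^sub>R y))" if "\<mu> \<ge> 1" for \<mu>
  proof (rule dom_int[where A=E0])
    fix y :: 'a
    have "\<bar>\<Phi> (\<mu> *\<^sub>R y)\<bar> \<le> \<psi> (\<mu> *\<^sub>R y)"
      using t01[of "(norm (\<mu> *\<^sub>R y))^2"] psi_pos[of "\<mu> *\<^sub>R y"]
      by (auto simp: \<Phi>_def abs_mult intro!: mult_left_le_one_le)
    also have "\<dots> \<le> E0 * exp (- ((norm y)^2) / 4)" using psiB[OF that] .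
    also have "\<dots> \<le> E0 * (1 + (norm y)^2) * exp (- ((norm y)^2) / 4)"
      using E0 by (intro mult_right_mono) auto
    finally show "\<bar>\<Phi> (\<mu> *\<^sub>R y)\<bar> \<le> E0 * (1 + (norm y)^2) * exp (- ((norm y)^2) / 4)" .
  qed (use that in measurable)
  have intPhi: "integrable lborel \<Phi>" using intPhi_s[of 1] by simp
  have intTP: "integrable lborel (\<lambda>y. 2 * (norm y)^2 * tp ((norm y)^2) * \<psi> y)"
  proof (rule dom_int[where A="2 * E0"])
    fix y :: 'a
    have "\<bar>2 * (norm y)^2 * tp ((norm y)^2) * \<psi> y\<bar> = 2 * \<bar>(norm y)^2 * tp ((norm y)^2)\<bar> * \<psi> y"
      using psi_pos[of y] by (simp add: abs_mult)
    also have "\<dots> \<le> 2 * 1 * \<psi> y" using tpb[of "(norm y)^2"] psi_pos[of y]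
      by (intro mult_right_mono mult_left_mono) auto
    also have "\<dots> \<le> 2 * (E0 * exp (- ((norm y)^2) / 4))" using psiB1[of y] by simp
    also have "\<dots> \<le> 2 * E0 * (1 + (norm y)^2) * exp (- ((norm y)^2) / 4)"
      using E0 by (simp add: mult.assoc mult_left_mono)
    finally show "\<bar>2 * (norm y)^2 * tp ((norm y)^2) * \<psi> y\<bar> \<le> 2 * E0 * (1 + (norm y)^2) * exp (- ((norm y)^2) / 4)" .
  qed measurable
  have intQ: "(\<integral>y. Q n y \<partial>lborel) = (inverse ((lam n)^DIM('a)) - 1) / (1 / real (Suc n)) * (\<integral>y. \<Phi> y \<partial>lborel)" for n
  proof -
    have lp: "lam n > 0" using lam1[of n] by simp
    have sc: "(\<integral>y. \<Phi> y \<partial>lborel) = (lam n)^DIM('a) * (\<integral>y. \<Phi> (lam n *\<^sub>R y) \<partial>lborel)"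
      by (rule integral_scale[OF _ lp]) measurable
    have "(\<integral>y. Q n y \<partial>lborel) = ((\<integral>y. \<Phi> (lam n *\<^sub>R y) \<partial>lborel) - (\<integral>y. \<Phi> y \<partial>lborel)) / (1 / real (Suc n))"
      unfolding Q_def using intPhi_s[OF lam1[of n]] intPhi by simp
    also have "(\<integral>y. \<Phi> (lam n *\<^sub>R y) \<partial>lborel) = inverse ((lam n)^DIM('a)) * (\<integral>y. \<Phi> y \<partial>lborel)"
      using sc lp by simp
    finally show ?thesis by (simp add: algebra_simps)
  qed
  have dinv: "((\<lambda>r. inverse (r ^ DIM('a))) has_real_derivative - real DIM('a)) (at 1)"
    by (auto intro!: derivative_eq_intros)
  have limQ1: "(\<lambda>n. \<integral>y. Q n y \<partial>lborel) \<longlonglongrightarrow> - real DIM('a) * (\<integral>y. \<Phi> y \<partial>lborel)"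
    unfolding intQ lam_def using deriv_seq[OF dinv] by (intro tendsto_mult tendsto_const) simp
  have ptw: "(\<lambda>n. Q n y) \<longlonglongrightarrow> L y" if y0: "y \<noteq> 0" and yc: "norm y \<noteq> sqrt c" for y
  proof -
    define u where "u = (norm y)^2"
    have u0: "u > 0" using y0 by (simp add: u_def)
    have uc: "u \<noteq> c" using yc c by (auto simp: u_def)
    define G where "G r = t (r^2 * u) * exp (- (r^2 * u - 2 * r * (x \<bullet> y) + (norm x)^2) / 2)" for r
    have G: "G r = \<Phi> (r *\<^sub>R y)" for r
      by (simp add: G_def \<Phi>_def \<psi>_def u_def norm_scale_diff_sq power_mult_distrib)
    have d1: "(t has_real_derivative tp u) (at ((\<lambda>r. r^2 * u) 1))" using tder[OF u0 uc] by simp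
    have d2: "((\<lambda>r. r^2 * u) has_real_derivative 2 * u) (at 1)"
      by (auto intro!: derivative_eq_intros)
    have dt: "((\<lambda>r. t (r^2 * u)) has_real_derivative tp u * (2 * u)) (at 1)"
      using DERIV_chain2[OF d1 d2] .
    have de: "((\<lambda>r. exp (- (r^2 * u - 2 * r * (x \<bullet> y) + (norm x)^2) / 2)) has_real_derivative
        exp (- (1^2 * u - 2 * 1 * (x \<bullet> y) + (norm x)^2) / 2) * (- (2 * u - 2 * (x \<bullet> y)) / 2)) (at 1)"
      by (auto intro!: derivative_eq_intros)
    have dG: "(G has_real_derivative L y) (at 1)"
    proof -
      have "(G has_real_derivative t (1^2 * u) * (exp (- (1^2 * u - 2 * 1 * (x \<bullet> y) + (norm x)^2) / 2) * (- (2 * u - 2 * (x \<bullet> y)) / 2))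
            + tp u * (2 * u) * exp (- (1^2 * u - 2 * 1 * (x \<bullet> y) + (norm x)^2) / 2)) (at 1)"
        unfolding G_def[abs_def] by (rule DERIV_mult'[OF dt de])
      moreover have "t (1^2 * u) * (exp (- (1^2 * u - 2 * 1 * (x \<bullet> y) + (norm x)^2) / 2) * (- (2 * u - 2 * (x \<bullet> y)) / 2))
            + tp u * (2 * u) * exp (- (1^2 * u - 2 * 1 * (x \<bullet> y) + (norm x)^2) / 2) = L y"
      proof -
        have "exp (- (1^2 * u - 2 * 1 * (x \<bullet> y) + (norm x)^2) / 2) = \<psi> y"
        proof -
          have "(norm (y - x))^2 = u - 2 * (x \<bullet> y) + (norm x)^2"
            using norm_scale_diff_sq[of 1 y x] by (simp add: u_def)
          then show ?thesis by (simp add: \<psi>_def)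
        qed
        moreover have "y \<bullet> (y - x) = u - x \<bullet> y"
          by (simp add: u_def inner_diff_right inner_commute power2_norm_eq_inner)
        moreover have "L y = 2 * u * tp u * \<psi> y - t u * (y \<bullet> (y - x)) * \<psi> y"
          by (simp only: L_def u_def)
        ultimately show ?thesis by (simp add: algebra_simps divide_simps inner_commute)
      qed
      ultimately show ?thesis by simp
    qed
    have "(\<lambda>n. (G (1 + 1 / real (Suc n)) - G 1) / (1 / real (Suc n))) \<longlonglongrightarrow> L y"
      by (rule deriv_seq[OF dG])
    then show ?thesis by (simp add: Q_def G lam_def)
  qed
  have AEptw: "AE y in lborel. (\<lambda>n. Q n y) \<longlonglongrightarrow> L y"
    using AE_lborel_singleton[of "0::'a"] AE_not_sphere[of "sqrt c", where 'a='a]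
    by eventually_elim (rule ptw)
  have domQ: "norm (Q n y) \<le> W y" for n y
  proof -
    define h where "h = 1 / real (Suc n)"
    define l where "l = lam n"
    define u where "u = (norm y)^2"
    define e where "e = E0 * exp (- u / 4)"
    have h0: "0 < h" and h1: "h \<le> 1" by (auto simp: h_def)
    have l: "l = 1 + h" by (simp add: l_def lam_def h_def)
    have u0: "0 \<le> u" by (simp add: u_def)
    have e0: "0 \<le> e" using E0 by (simp add: e_def)
    have nl: "(norm (l *\<^sub>R y))^2 = l^2 * u" using l h0 by (simp add: u_def power_mult_distrib)
    have T1: "\<bar>t (l^2 * u) - t u\<bar> \<le> 3 * h"
    proof (cases "u = 0")
      case True then show ?thesis using h0 by simp
    next
      case False
      then have up: "u > 0" using u0 by simp
      have "l^2 * u \<ge> u" using l h0 up by (simp add: power2_eq_square algebra_simps)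
      then have "\<bar>t (l^2 * u) - t u\<bar> \<le> (l^2 * u - u) / (l^2 * u)" using tlip[OF up] by simp
      also have "\<dots> = (l^2 - 1) / l^2" using up l h0 by (simp add: field_simps)
      also have "\<dots> \<le> (l^2 - 1) / 1"
      proof (rule divide_left_mono)
        have "1 \<le> l^2" using l h0 by (simp add: power2_eq_square algebra_simps)
        then show "1 \<le> l^2" "0 \<le> l^2 - 1" "0 < l^2 * 1" by auto
      qed
      also have "\<dots> = l^2 - 1" by simp
      also have "\<dots> \<le> 3 * h" using l h0 h1 by (simp add: power2_eq_square algebra_simps)
      finally show ?thesis .
    qed
    have pl: "\<psi> (l *\<^sub>R y) \<le> e" using psiB[of l y] l h0 by (simp add: e_def u_def)
    have p1: "\<psi> y \<le> e" using psiB1[of y] by (simp add: e_def u_def)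
    have T2: "\<bar>\<psi> (l *\<^sub>R y) - \<psi> y\<bar> \<le> h * (2 * u + (norm x)^2 / 2) * e"
    proof -
      define a1 where "a1 = (norm (l *\<^sub>R y - x))^2 / 2"
      define a2 where "a2 = (norm (1 *\<^sub>R y - x))^2 / 2"
      have pa1: "\<psi> (l *\<^sub>R y) = exp (- a1)" by (simp add: \<psi>_def a1_def)
      have pa2: "\<psi> y = exp (- a2)" by (simp add: \<psi>_def a2_def)
      have "exp (- min a1 a2) \<le> e"
        using pl p1 pa1 pa2 by (cases "a1 \<le> a2") (auto simp: min_def)
      have diff: "a1 - a2 = ((l^2 - 1) * u - 2 * (l - 1) * (x \<bullet> y)) / 2"
        unfolding a1_def a2_def norm_scale_diff_sq by (simp add: u_def field_simps)
      have cs: "\<bar>x \<bullet> y\<bar> \<le> norm x * norm y" by (rule Cauchy_Schwarz_ineq2)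
      have "2 * (norm x * norm y) \<le> (norm x)^2 + u"
        using sum_squares_bound[of "norm x" "norm y"] by (simp add: u_def power2_eq_square)
      have "\<bar>a1 - a2\<bar> \<le> (3 * h * u + 2 * h * \<bar>x \<bullet> y\<bar>) / 2"
      proof -
        have "\<bar>(l^2 - 1) * u - 2 * (l - 1) * (x \<bullet> y)\<bar> \<le> \<bar>(l^2 - 1) * u\<bar> + \<bar>2 * (l - 1) * (x \<bullet> y)\<bar>"
          by (rule abs_triangle_ineq4)
        also have "\<bar>(l^2 - 1) * u\<bar> = (2 * h + h^2) * u" using l h0 u0 by (simp add: abs_mult power2_eq_square algebra_simps)
        also have "\<dots> \<le> 3 * h * u" using h0 h1 u0 by (intro mult_right_mono) (auto simp: power2_eq_square)
        also have "\<bar>2 * (l - 1) * (x \<bullet> y)\<bar> = 2 * h * \<bar>x \<bullet> y\<bar>" using l h0 by (simp add: abs_mult)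
        finally show ?thesis unfolding diff by simp
      qed
      also have "\<dots> \<le> (3 * h * u + h * ((norm x)^2 + u)) / 2"
      proof -
        have "2 * \<bar>x \<bullet> y\<bar> \<le> (norm x)^2 + u"
          using \<open>2 * (norm x * norm y) \<le> (norm x)^2 + u\<close> cs by linarith
        then have "h * (2 * \<bar>x \<bullet> y\<bar>) \<le> h * ((norm x)^2 + u)" using h0 by (intro mult_left_mono) auto
        then show ?thesis by (simp add: algebra_simps)
      qed
      also have "\<dots> = h * (2 * u + (norm x)^2 / 2)" by (simp add: algebra_simps)
      finally have ad: "\<bar>a1 - a2\<bar> \<le> h * (2 * u + (norm x)^2 / 2)" .
      have "\<bar>\<psi> (l *\<^sub>R y) - \<psi> y\<bar> \<le> \<bar>a1 - a2\<bar> * exp (- min a1 a2)"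
        unfolding pa1 pa2 by (rule exp_diff_bound)
      also have "\<dots> \<le> h * (2 * u + (norm x)^2 / 2) * e"
        using ad \<open>exp (- min a1 a2) \<le> e\<close> by (intro mult_mono) auto
      finally show ?thesis .
    qed
    have tu: "0 \<le> t u" "t u \<le> 1" using t01[OF u0] by auto
    have "\<Phi> (l *\<^sub>R y) - \<Phi> y = (t (l^2 * u) - t u) * \<psi> (l *\<^sub>R y) + t u * (\<psi> (l *\<^sub>R y) - \<psi> y)"
      by (simp add: \<Phi>_def nl u_def algebra_simps)
    then have "\<bar>\<Phi> (l *\<^sub>R y) - \<Phi> y\<bar> \<le> \<bar>t (l^2 * u) - t u\<bar> * \<psi> (l *\<^sub>R y) + t u * \<bar>\<psi> (l *\<^sub>R y) - \<psi> y\<bar>"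
    proof -
      have "\<bar>(t (l^2 * u) - t u) * \<psi> (l *\<^sub>R y) + t u * (\<psi> (l *\<^sub>R y) - \<psi> y)\<bar>
         \<le> \<bar>(t (l^2 * u) - t u) * \<psi> (l *\<^sub>R y)\<bar> + \<bar>t u * (\<psi> (l *\<^sub>R y) - \<psi> y)\<bar>"
        by (rule abs_triangle_ineq)
      also have "\<dots> = \<bar>t (l^2 * u) - t u\<bar> * \<psi> (l *\<^sub>R y) + t u * \<bar>\<psi> (l *\<^sub>R y) - \<psi> y\<bar>"
        using psi_pos[of "l *\<^sub>R y"] tu by (simp add: abs_mult)
      finally show ?thesis using \<open>\<Phi> (l *\<^sub>R y) - \<Phi> y = _\<close> by simp
    qed
    also have "\<dots> \<le> 3 * h * e + 1 * (h * (2 * u + (norm x)^2 / 2) * e)"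
      using T1 T2 pl tu psi_pos[of "l *\<^sub>R y"] h0 e0
      by (intro add_mono mult_mono) auto
    also have "\<dots> = h * ((3 + 2 * u + (norm x)^2 / 2) * e)" by (simp add: algebra_simps)
    finally have D: "\<bar>\<Phi> (l *\<^sub>R y) - \<Phi> y\<bar> / h \<le> (3 + 2 * u + (norm x)^2 / 2) * e"
      using h0 by (simp add: divide_le_eq mult.commute)
    have "(3 + 2 * u + (norm x)^2 / 2) \<le> (3 + (norm x)^2) * (1 + u)"
    proof -
      have "(3 + (norm x)^2) * (1 + u) = 3 + 3 * u + (norm x)^2 + (norm x)^2 * u" by (simp add: algebra_simps)
      moreover have "0 \<le> (norm x)^2 * u" using u0 by simp
      ultimately show ?thesis using u0 zero_le_power2[of "norm x"] by linarith
    qed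
    then have "(3 + 2 * u + (norm x)^2 / 2) * e \<le> (3 + (norm x)^2) * (1 + u) * e"
      using e0 by (rule mult_right_mono)
    also have "\<dots> = W y" by (simp add: W_def A_def e_def u_def algebra_simps)
    finally show ?thesis using D by (simp add: Q_def h_def l_def abs_mult)
  qed
  have limQ2: "(\<lambda>n. \<integral>y. Q n y \<partial>lborel) \<longlonglongrightarrow> (\<integral>y. L y \<partial>lborel)"
    by (rule integral_dominated_convergence[where w=W]) (use intW AEptw domQ in auto)
  have intL: "integrable lborel L"
    by (rule integrable_dominated_convergence[where w=W and s=Q]) (use intW AEptw domQ in auto)
  have IL: "(\<integral>y. L y \<partial>lborel) = - real DIM('a) * (\<integral>y. \<Phi> y \<partial>lborel)"
    using LIMSEQ_unique[OF limQ2 limQ1] .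
  have "(\<integral>y. t ((norm y)^2) * (y \<bullet> (y - x)) * \<psi> y \<partial>lborel)
      = (\<integral>y. 2 * (norm y)^2 * tp ((norm y)^2) * \<psi> y - L y \<partial>lborel)"
    by (simp add: L_def)
  also have "\<dots> = (\<integral>y. 2 * (norm y)^2 * tp ((norm y)^2) * \<psi> y \<partial>lborel) - (\<integral>y. L y \<partial>lborel)"
    by (rule Bochner_Integration.integral_diff[OF intTP intL])
  also have "\<dots> = (\<integral>y. 2 * (norm y)^2 * tp ((norm y)^2) * \<psi> y \<partial>lborel) + (\<integral>y. real DIM('a) * \<Phi> y \<partial>lborel)"
    unfolding IL by simp
  also have "\<dots> = (\<integral>y. 2 * (norm y)^2 * tp ((norm y)^2) * \<psi> y + real DIM('a) * \<Phi> y \<partial>lborel)"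
    by (rule Bochner_Integration.integral_add[symmetric]) (use intTP intPhi in auto)
  also have "\<dots> = (\<integral>y. (DIM('a) * t ((norm y)^2) + 2 * (norm y)^2 * tp ((norm y)^2)) * \<psi> y \<partial>lborel)"
    by (simp add: \<Phi>_def algebra_simps)
  finally show ?thesis by (simp add: \<psi>_def)
qed




lemma int_poly_psi:
  fixes x :: "'a::euclidean_space" and P :: "'a \<Rightarrow> real"
  assumes [measurable]: "P \<in> borel_measurable borel" and b: "\<And>y. \<bar>P y\<bar> \<le> M * (1 + (norm y)^2)"
  shows "integrable lborel (\<lambda>y. P y * exp (- ((norm (y - x))^2) / 2))"
proof (rule dom_int[where A="M * exp ((norm x)^2 / 2)"])
  fix y :: 'a
  have pb: "exp (- ((norm (y - x))^2) / 2) \<le> exp ((norm x)^2 / 2) * exp (- ((norm y)^2) / 4)"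
    using psi_bound[of 1 y x] by simp
  have "\<bar>P y * exp (- ((norm (y - x))^2) / 2)\<bar> = \<bar>P y\<bar> * exp (- ((norm (y - x))^2) / 2)"
    by (simp add: abs_mult)
  also have "\<dots> \<le> (M * (1 + (norm y)^2)) * (exp ((norm x)^2 / 2) * exp (- ((norm y)^2) / 4))"
    using b[of y] pb by (intro mult_mono) auto
  finally show "\<bar>P y * exp (- ((norm (y - x))^2) / 2)\<bar> \<le> M * exp ((norm x)^2 / 2) * (1 + (norm y)^2) * exp (- ((norm y)^2) / 4)"
    by (simp add: algebra_simps)
qed measurable

lemma inner_le_bound: "\<bar>(y::'a::real_inner) \<bullet> (y - x)\<bar> \<le> (2 + (norm x)^2) * (1 + (norm y)^2)"
proof -
  have "\<bar>y \<bullet> (y - x)\<bar> \<le> norm y * norm (y - x)" by (rule Cauchy_Schwarz_ineq2)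
  also have "\<dots> \<le> norm y * (norm y + norm x)" by (intro mult_left_mono norm_triangle_ineq4) auto
  also have "\<dots> = (norm y)^2 + norm x * norm y" by (simp add: power2_eq_square algebra_simps)
  also have "norm x * norm y \<le> (norm x)^2 + (norm y)^2"
    using sum_squares_bound[of "norm x" "norm y"] zero_le_power2[of "norm x"] zero_le_power2[of "norm y"]
      mult_nonneg_nonneg[of "norm x" "norm y"] by linarith
  finally have "\<bar>y \<bullet> (y - x)\<bar> \<le> 2 * (norm y)^2 + (norm x)^2" by simp
  also have "\<dots> \<le> (2 + (norm x)^2) * (1 + (norm y)^2)"
    using mult_nonneg_nonneg[OF zero_le_power2[of "norm x"] zero_le_power2[of "norm y"]]
    by (simp add: algebra_simps)
  finally show ?thesis .
qed


lemma risk_main: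
  fixes x :: "'a::euclidean_space"
  assumes D: "DIM('a) > 2"
  defines "js \<equiv> \<lambda>y::'a. max 0 (1 - (real DIM('a) - 2) / (norm y)^2) *\<^sub>R y"
  shows "integrable lborel (\<lambda>y. (norm (x - js y))^2 * exp (- ((norm (y - x))^2) / 2))"
    and "(\<integral>y. (norm (x - js y))^2 * exp (- ((norm (y - x))^2) / 2) \<partial>lborel)
           \<le> real DIM('a) * (\<integral>y. exp (- ((norm (y::'a))^2) / 2) \<partial>lborel)"
    and "x = 0 \<Longrightarrow> (\<integral>y. (norm (x - js y))^2 * exp (- ((norm (y - x))^2) / 2) \<partial>lborel)
           \<le> 2 * (\<integral>y. exp (- ((norm (y::'a))^2) / 2) \<partial>lborel)"
proof -
  define c where "c = real DIM('a) - 2"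
  have c: "c > 0" using D by (simp add: c_def)
  define t where "t u = (if u \<le> c then 1 else c / u)" for u :: real
  define tp where "tp u = (if u \<le> c then 0 else - c / u^2)" for u :: real
  define \<psi> where "\<psi> y = exp (- ((norm (y - x))^2) / 2)" for y :: 'a
  define \<psi>0 where "\<psi>0 y = exp (- ((norm y)^2) / 2)" for y :: 'a
  have tm[measurable]: "t \<in> borel_measurable borel" unfolding t_def[abs_def] by measurable
  have tpm[measurable]: "tp \<in> borel_measurable borel" unfolding tp_def[abs_def] by measurable
  have t01: "0 \<le> t u \<and> t u \<le> 1" if "0 \<le> u" for u
    using c by (auto simp: t_def)
  have tlip: "\<bar>t v - t u\<bar> \<le> (v - u) / v" if "0 < u" "u \<le> v" for u v
  proof -
    have v: "v > 0" using that by simp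
    consider "v \<le> c" | "u \<le> c" "c < v" | "c < u" by linarith
    then show ?thesis
    proof cases
      case 1 then show ?thesis using that by (simp add: t_def)
    next
      case 2
      then have "\<bar>t v - t u\<bar> = (v - c) / v" using v by (simp add: t_def field_simps)
      also have "\<dots> \<le> (v - u) / v" using 2 v by (intro divide_right_mono) auto
      finally show ?thesis .
    next
      case 3
      then have "\<bar>t v - t u\<bar> = c / u - c / v" using that c
        by (simp add: t_def) (simp add: abs_if divide_left_mono field_simps)
      also have "\<dots> = (c / u) * ((v - u) / v)" using that by (simp add: field_simps)
      also have "\<dots> \<le> 1 * ((v - u) / v)" using 3 that c by (intro mult_right_mono) auto
      finally show ?thesis by simp
    qed
  qed
  have tder: "(t has_real_derivative tp u) (at u)" if "0 < u" "u \<noteq> c" for u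
  proof (cases "u < c")
    case True
    have "((\<lambda>_. 1) has_real_derivative tp u) (at u)" using True by (simp add: tp_def)
    then show ?thesis
      by (rule has_field_derivative_transform_within_open[where S="{..<c}"]) (use True in \<open>auto simp: t_def tp_def\<close>)
  next
    case False
    then have uc: "u > c" using that by simp
    have "((\<lambda>v. c / v) has_real_derivative tp u) (at u)"
      using that uc by (auto intro!: derivative_eq_intros simp: power2_eq_square tp_def)
    then show ?thesis
      by (rule has_field_derivative_transform_within_open[where S="{c<..}"]) (use uc in \<open>auto simp: t_def tp_def\<close>)
  qed
  have tpb: "\<bar>u * tp u\<bar> \<le> 1" if "0 \<le> u" for u
    using that c by (auto simp: tp_def power2_eq_square abs_mult divide_le_eq)
  have jsy: "js y = (1 - t ((norm y)^2)) *\<^sub>R y" for y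
  proof (cases "y = 0")
    case False
    then have u: "(norm y)^2 > 0" by simp
    show ?thesis
    proof (cases "(norm y)^2 \<le> c")
      case True
      then have "1 \<le> c / (norm y)^2" using u by (simp add: le_divide_eq)
      then show ?thesis using True by (simp add: js_def t_def c_def)
    next
      case False
      then have "c / (norm y)^2 < 1" using u by (simp add: divide_less_eq)
      then show ?thesis using False by (simp add: js_def t_def c_def)
    qed
  qed (simp add: js_def)
  have expand: "(norm (x - js y))^2 = (norm (y - x))^2 - 2 * t ((norm y)^2) * (y \<bullet> (y - x)) + (t ((norm y)^2))^2 * (norm y)^2" for y
    unfolding jsy power2_norm_eq_inner
    by (simp add: inner_diff_left inner_diff_right inner_commute algebra_simps power2_eq_square)
  define h0 where "h0 y = (t ((norm y)^2))^2 * (norm y)^2 - 2 * real DIM('a) * t ((norm y)^2) - 4 * (norm y)^2 * tp ((norm y)^2)" for y :: 'a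
  define I0 where "I0 = (\<integral>y. \<psi>0 y \<partial>lborel)"
  have [measurable]: "\<psi> \<in> borel_measurable borel" "\<psi>0 \<in> borel_measurable borel" "h0 \<in> borel_measurable borel"
    unfolding \<psi>_def[abs_def] \<psi>0_def[abs_def] h0_def[abs_def] by measurable
  have Dc: "real DIM('a) = c + 2" by (simp add: c_def)
  have S1: "(\<integral>y. t ((norm y)^2) * (y \<bullet> (y - x)) * \<psi> y \<partial>lborel) =
         (\<integral>y. (DIM('a) * t ((norm y)^2) + 2 * (norm y)^2 * tp ((norm y)^2)) * \<psi> y \<partial>lborel)"
    unfolding \<psi>_def by (rule stein_scale[OF tm tpm c t01 tlip tder tpb])
  have S0: "(\<integral>y. (\<lambda>_. 1::real) ((norm y)^2) * (y \<bullet> (y - (0::'a))) * exp (- ((norm (y - 0))^2) / 2) \<partial>lborel) =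
         (\<integral>y. (DIM('a) * (\<lambda>_. 1::real) ((norm y)^2) + 2 * (norm y)^2 * (\<lambda>_. 0::real) ((norm y)^2)) * exp (- ((norm (y - (0::'a)))^2) / 2) \<partial>lborel)"
    by (rule stein_scale[where t="\<lambda>_. 1" and tp="\<lambda>_. 0" and c=1 and x="0::'a"]) auto
  have Ipsi: "integrable lborel \<psi>"
    using int_poly_psi[of "\<lambda>_. 1" 1 x] by (simp add: \<psi>_def[abs_def])
  have Ia: "integrable lborel (\<lambda>y. (norm (y - x))^2 * \<psi> y)"
    unfolding \<psi>_def
  proof (rule int_poly_psi[where M="2 + 2 * (norm x)^2"])
    fix y :: 'a
    have "norm (y - x) \<le> norm y + norm x" by (rule norm_triangle_ineq4)
    then have "(norm (y - x))^2 \<le> (norm y + norm x)^2" by (simp add: power_mono)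
    also have "\<dots> \<le> 2 * (norm y)^2 + 2 * (norm x)^2"
      using zero_le_power2[of "norm y - norm x"] unfolding power2_sum power2_diff by linarith
    also have "\<dots> \<le> (2 + 2 * (norm x)^2) * (1 + (norm y)^2)"
      using mult_nonneg_nonneg[OF zero_le_power2[of "norm x"] zero_le_power2[of "norm y"]]
      by (simp add: algebra_simps)
    finally show "\<bar>(norm (y - x))^2\<bar> \<le> (2 + 2 * (norm x)^2) * (1 + (norm y)^2)" by simp
  qed measurable
  have Ib: "integrable lborel (\<lambda>y. t ((norm y)^2) * (y \<bullet> (y - x)) * \<psi> y)"
    unfolding \<psi>_def
  proof (rule int_poly_psi[where M="2 + (norm x)^2"])
    fix y :: 'a
    have "\<bar>t ((norm y)^2) * (y \<bullet> (y - x))\<bar> \<le> 1 * \<bar>y \<bullet> (y - x)\<bar>"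
      using t01[of "(norm y)^2"] by (simp add: abs_mult mult_left_le_one_le)
    also have "\<dots> \<le> (2 + (norm x)^2) * (1 + (norm y)^2)" using inner_le_bound[of y x] by simp
    finally show "\<bar>t ((norm y)^2) * (y \<bullet> (y - x))\<bar> \<le> (2 + (norm x)^2) * (1 + (norm y)^2)" .
  qed measurable
  have Ic: "integrable lborel (\<lambda>y. (DIM('a) * t ((norm y)^2) + 2 * (norm y)^2 * tp ((norm y)^2)) * \<psi> y)"
    unfolding \<psi>_def
  proof (rule int_poly_psi[where M="real DIM('a) + 2"])
    fix y :: 'a
    have "\<bar>DIM('a) * t ((norm y)^2) + 2 * (norm y)^2 * tp ((norm y)^2)\<bar> \<le> real DIM('a) * 1 + 2 * 1"
    proof -
      have "\<bar>DIM('a) * t ((norm y)^2) + 2 * (norm y)^2 * tp ((norm y)^2)\<bar> \<le> \<bar>DIM('a) * t ((norm y)^2)\<bar> + \<bar>2 * ((norm y)^2 * tp ((norm y)^2))\<bar>"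
        by (metis abs_triangle_ineq mult.assoc)
      also have "\<dots> = DIM('a) * \<bar>t ((norm y)^2)\<bar> + 2 * \<bar>(norm y)^2 * tp ((norm y)^2)\<bar>" by (simp add: abs_mult)
      also have "\<dots> \<le> real DIM('a) * 1 + 2 * 1"
        using t01[of "(norm y)^2"] tpb[of "(norm y)^2"] by (intro add_mono mult_left_mono) auto
      finally show ?thesis .
    qed
    also have "\<dots> \<le> (real DIM('a) + 2) * (1 + (norm y)^2)" by (simp add: algebra_simps)
    finally show "\<bar>DIM('a) * t ((norm y)^2) + 2 * (norm y)^2 * tp ((norm y)^2)\<bar> \<le> (real DIM('a) + 2) * (1 + (norm y)^2)" .
  qed measurable
  have Ih: "integrable lborel (\<lambda>y. h0 y * \<psi> y)"
    unfolding \<psi>_def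
  proof (rule int_poly_psi[where M="2 * real DIM('a) + 5"])
    fix y :: 'a
    define u where "u = (norm y)^2"
    have u: "0 \<le> u" by (simp add: u_def)
    have "\<bar>h0 y\<bar> \<le> 1 * u + 2 * real DIM('a) * 1 + 4 * 1"
    proof -
      have a: "\<bar>(t u)^2 * u\<bar> \<le> 1 * u"
      proof -
        have "(t u)^2 \<le> 1" using t01[OF u] by (simp add: power_le_one)
        then have "(t u)^2 * u \<le> 1 * u" using u by (rule mult_right_mono)
        then show ?thesis using u by (simp add: abs_mult)
      qed
      have b: "\<bar>2 * real DIM('a) * t u\<bar> \<le> 2 * real DIM('a) * 1" using t01[OF u] by (simp add: abs_mult)
      have d: "\<bar>4 * u * tp u\<bar> \<le> 4 * 1" using tpb[OF u] by (simp add: abs_mult mult.assoc)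
      show ?thesis using a b d unfolding h0_def u_def[symmetric] by linarith
    qed
    also have "\<dots> \<le> (2 * real DIM('a) + 5) * (1 + u)" using u by (simp add: algebra_simps)
    finally show "\<bar>h0 y\<bar> \<le> (2 * real DIM('a) + 5) * (1 + (norm y)^2)" by (simp add: u_def)
  qed measurable
  have E: "(\<integral>y. (norm (y - x))^2 * \<psi> y \<partial>lborel) = real DIM('a) * I0"
  proof -
    have "(\<integral>y. (norm (y - x))^2 * \<psi> y \<partial>lborel) = (\<integral>z. (norm ((x + z) - x))^2 * \<psi> (x + z) \<partial>lborel)"
      by (rule integral_shift) measurable
    also have "\<dots> = (\<integral>z. (\<lambda>_. 1::real) ((norm z)^2) * (z \<bullet> (z - (0::'a))) * exp (- ((norm (z - (0::'a)))^2) / 2) \<partial>lborel)"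
      by (simp add: \<psi>_def power2_norm_eq_inner)
    also have "\<dots> = real DIM('a) * I0" unfolding S0 by (simp add: I0_def \<psi>0_def)
    finally show ?thesis .
  qed
  have main: "(\<integral>y. (norm (x - js y))^2 * \<psi> y \<partial>lborel) = real DIM('a) * I0 + (\<integral>y. h0 y * \<psi> y \<partial>lborel)"
  proof -
    have "(\<integral>y. (norm (x - js y))^2 * \<psi> y \<partial>lborel) =
       (\<integral>y. ((norm (y - x))^2 * \<psi> y - 2 * (t ((norm y)^2) * (y \<bullet> (y - x)) * \<psi> y
          - (DIM('a) * t ((norm y)^2) + 2 * (norm y)^2 * tp ((norm y)^2)) * \<psi> y)) + h0 y * \<psi> y \<partial>lborel)"
      by (rule Bochner_Integration.integral_cong) (simp_all add: expand h0_def algebra_simps)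
    also have "\<dots> = ((\<integral>y. (norm (y - x))^2 * \<psi> y \<partial>lborel) - 2 * ((\<integral>y. t ((norm y)^2) * (y \<bullet> (y - x)) * \<psi> y \<partial>lborel)
          - (\<integral>y. (DIM('a) * t ((norm y)^2) + 2 * (norm y)^2 * tp ((norm y)^2)) * \<psi> y \<partial>lborel))) + (\<integral>y. h0 y * \<psi> y \<partial>lborel)"
      using Ia Ib Ic Ih by simp
    also have "\<dots> = real DIM('a) * I0 + (\<integral>y. h0 y * \<psi> y \<partial>lborel)" unfolding S1 E by simp
    finally show ?thesis .
  qed
  have intf: "integrable lborel (\<lambda>y. (norm (x - js y))^2 * \<psi> y)"
  proof -
    have "integrable lborel (\<lambda>y. ((norm (y - x))^2 * \<psi> y - 2 * (t ((norm y)^2) * (y \<bullet> (y - x)) * \<psi> y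
          - (DIM('a) * t ((norm y)^2) + 2 * (norm y)^2 * tp ((norm y)^2)) * \<psi> y)) + h0 y * \<psi> y)"
      using Ia Ib Ic Ih by auto
    moreover have "(\<lambda>y. (norm (x - js y))^2 * \<psi> y) = (\<lambda>y. ((norm (y - x))^2 * \<psi> y - 2 * (t ((norm y)^2) * (y \<bullet> (y - x)) * \<psi> y
          - (DIM('a) * t ((norm y)^2) + 2 * (norm y)^2 * tp ((norm y)^2)) * \<psi> y)) + h0 y * \<psi> y)"
      by (rule ext) (simp add: expand h0_def algebra_simps)
    ultimately show ?thesis by simp
  qed
  show "integrable lborel (\<lambda>y. (norm (x - js y))^2 * exp (- ((norm (y - x))^2) / 2))"
    using intf by (simp add: \<psi>_def)
  show "(\<integral>y. (norm (x - js y))^2 * exp (- ((norm (y - x))^2) / 2) \<partial>lborel)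
           \<le> real DIM('a) * (\<integral>y. exp (- ((norm (y::'a))^2) / 2) \<partial>lborel)"
  proof -
    have hneg: "h0 y * \<psi> y \<le> 0" for y
    proof -
      define u where "u = (norm y)^2"
      have "h0 y \<le> 0"
      proof (cases "u \<le> c")
        case True
        then show ?thesis using c by (simp add: h0_def t_def tp_def u_def[symmetric] Dc)
      next
        case False
        then have u: "u > 0" using c by simp
        have "h0 y = (c / u)^2 * u - 2 * (c + 2) * (c / u) - 4 * u * (- c / u^2)"
          using False by (simp add: h0_def t_def tp_def u_def[symmetric] Dc)
        also have "\<dots> = - (c^2 / u)" using u by (simp add: field_simps power2_eq_square)
        also have "\<dots> \<le> 0" using u by simp
        finally show ?thesis .
      qed
      then show ?thesis by (simp add: mult_nonpos_nonneg \<psi>_def)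
    qed
    have "0 \<le> (\<integral>y. - (h0 y * \<psi> y) \<partial>lborel)"
      by (rule Bochner_Integration.integral_nonneg) (use hneg in \<open>auto simp: neg_le_0_iff_le\<close>)
    then have "(\<integral>y. h0 y * \<psi> y \<partial>lborel) \<le> 0" by simp
    then show ?thesis using main by (simp add: \<psi>_def I0_def \<psi>0_def)
  qed
  show "x = 0 \<Longrightarrow> (\<integral>y. (norm (x - js y))^2 * exp (- ((norm (y - x))^2) / 2) \<partial>lborel)
           \<le> 2 * (\<integral>y. exp (- ((norm (y::'a))^2) / 2) \<partial>lborel)"
  proof -
    assume x0: "x = 0"
    define r where "r y = t ((norm y)^2) * (y \<bullet> (y - x)) - (DIM('a) * t ((norm y)^2) + 2 * (norm y)^2 * tp ((norm y)^2))" for y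
    have Ir: "integrable lborel (\<lambda>y. r y * \<psi> y)"
      using Ib Ic by (simp add: r_def left_diff_distrib)
    have r0: "(\<integral>y. r y * \<psi> y \<partial>lborel) = 0"
    proof -
      have "(\<integral>y. r y * \<psi> y \<partial>lborel) = (\<integral>y. t ((norm y)^2) * (y \<bullet> (y - x)) * \<psi> y -
          (DIM('a) * t ((norm y)^2) + 2 * (norm y)^2 * tp ((norm y)^2)) * \<psi> y \<partial>lborel)"
        by (simp add: r_def left_diff_distrib)
      also have "\<dots> = 0" using S1 Ib Ic by simp
      finally show ?thesis .
    qed
    have pw: "(h0 y - r y) * \<psi> y \<le> (- c) * \<psi> y" for y
    proof -
      define u where "u = (norm y)^2"
      have yy: "y \<bullet> (y - x) = u" using x0 by (simp add: u_def power2_norm_eq_inner)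
      have "h0 y - r y \<le> - c"
      proof (cases "u \<le> c")
        case True
        then show ?thesis using c by (simp add: h0_def r_def yy t_def tp_def u_def[symmetric] Dc)
      next
        case False
        then have u: "u > 0" using c by simp
        have "h0 y - r y = ((c / u)^2 * u - 2 * (c + 2) * (c / u) - 4 * u * (- c / u^2))
            - ((c / u) * u - ((c + 2) * (c / u) + 2 * u * (- c / u^2)))"
          using False by (simp add: h0_def r_def yy t_def tp_def u_def[symmetric] Dc)
        also have "\<dots> = - c" using u by (simp add: field_simps power2_eq_square)
        finally show ?thesis by simp
      qed
      then show ?thesis by (intro mult_right_mono) (auto simp: \<psi>_def)
    qed
    have "(\<integral>y. h0 y * \<psi> y \<partial>lborel) = (\<integral>y. (h0 y - r y) * \<psi> y + r y * \<psi> y \<partial>lborel)"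
      by (simp add: algebra_simps)
    also have "\<dots> = (\<integral>y. (h0 y - r y) * \<psi> y \<partial>lborel) + (\<integral>y. r y * \<psi> y \<partial>lborel)"
    proof (rule Bochner_Integration.integral_add)
      show "integrable lborel (\<lambda>y. (h0 y - r y) * \<psi> y)" using Ih Ir by (simp add: left_diff_distrib)
    qed (rule Ir)
    also have "\<dots> = (\<integral>y. (h0 y - r y) * \<psi> y \<partial>lborel)" using r0 by simp
    also have "\<dots> \<le> (\<integral>y. (- c) * \<psi> y \<partial>lborel)"
    proof (rule Bochner_Integration.integral_mono)
      show "integrable lborel (\<lambda>y. (h0 y - r y) * \<psi> y)" using Ih Ir by (simp add: left_diff_distrib)
      show "integrable lborel (\<lambda>y. (- c) * \<psi> y)" using Ipsi by simp
    qed (rule pw)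
    also have "\<dots> = - c * I0" using x0 by (simp add: I0_def \<psi>_def \<psi>0_def)
    finally have "(\<integral>y. h0 y * \<psi> y \<partial>lborel) \<le> - c * I0" .
    then have "(\<integral>y. (norm (x - js y))^2 * \<psi> y \<partial>lborel) \<le> 2 * I0"
      using main by (simp add: Dc algebra_simps)
    then show ?thesis using x0 by (simp add: \<psi>_def I0_def \<psi>0_def)
  qed
qed


lemma K_eq: "(2 * pi) powr (- real n / 2) = (1 / sqrt (2 * pi * 1^2)) ^ n"
proof -
  have "(2 * pi) powr (- real n / 2) = inverse (((2 * pi) powr (1/2)) powr real n)"
    by (simp add: powr_powr powr_minus)
  also have "(2 * pi) powr (1/2) = sqrt (2 * pi)" by (simp add: powr_half_sqrt)
  also have "sqrt (2 * pi) powr real n = sqrt (2 * pi) ^ n" by (simp add: powr_realpow)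
  finally show ?thesis by (simp add: power_one_over inverse_eq_divide)
qed

lemma risk_point:
  fixes x :: "real^'n::finite"
  assumes D: "CARD('n) > 2"
  shows "(\<integral>\<^sup>+ z. ennreal ((norm (x - james_stein (x + z)))^2) \<partial>std_gauss)
          \<le> (if x = 0 then 2 else ennreal (real CARD('n)))"
proof -
  define K where "K = (2 * pi) powr (- real CARD('n) / 2)"
  have K: "K > 0" by (simp add: K_def)
  define I0 where "I0 = (\<integral>y. exp (- ((norm (y::real^'n))^2) / 2) \<partial>lborel)"
  have KI: "K * I0 = 1"
  proof -
    have "(\<integral>y. (1/sqrt(2 * pi * 1^2))^DIM(real^'n) * exp (- ((norm (y - (0::real^'n)))^2) / (2 * 1^2)) \<partial>lborel) = 1"
      by (rule gauss_integral) simp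
    moreover have "K = (1 / sqrt (2 * pi)) ^ CARD('n)" using K_eq[of "CARD('n)"] by (simp add: K_def)
    ultimately show ?thesis by (simp add: I0_def)
  qed
  have jsd: "james_stein = (\<lambda>y::real^'n. max 0 (1 - (real DIM(real^'n) - 2) / (norm y)^2) *\<^sub>R y)"
    by (simp add: james_stein_def[abs_def])
  have Dd: "DIM(real^'n) > 2" using D by simp
  note RM = risk_main[OF Dd, of x]
  define F where "F y = K * ((norm (x - james_stein y))^2 * exp (- ((norm (y - x))^2) / 2))" for y
  have [measurable]: "james_stein \<in> borel_measurable (borel :: (real^'n) measure)"
    unfolding jsd by measurable
  have Fm[measurable]: "F \<in> borel_measurable borel" unfolding F_def[abs_def] by measurable
  have intF: "integrable lborel F" unfolding F_def using RM(1) by (simp add: james_stein_def)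
  have Fnn: "0 \<le> F y" for y using K by (simp add: F_def)
  have "(\<integral>\<^sup>+ z. ennreal ((norm (x - james_stein (x + z)))^2) \<partial>std_gauss)
      = (\<integral>\<^sup>+ z. ennreal (K * exp (- ((norm z)^2) / 2)) * ennreal ((norm (x - james_stein (x + z)))^2) \<partial>lborel)"
    unfolding std_gauss_def K_def by (subst nn_integral_density) auto
  also have "\<dots> = (\<integral>\<^sup>+ z. ennreal (F (x + z)) \<partial>lborel)"
    using K by (intro nn_integral_cong) (simp add: F_def ennreal_mult[symmetric] mult_ac)
  also have "\<dots> = (\<integral>\<^sup>+ y. ennreal (F y) \<partial>lborel)"
    by (rule nn_integral_shift[symmetric]) measurable
  also have "\<dots> = ennreal (\<integral>y. F y \<partial>lborel)"
    by (rule nn_integral_eq_integral[OF intF]) (simp add: Fnn)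
  also have "(\<integral>y. F y \<partial>lborel) = K * (\<integral>y. (norm (x - james_stein y))^2 * exp (- ((norm (y - x))^2) / 2) \<partial>lborel)"
    by (simp add: F_def)
  finally have eq: "(\<integral>\<^sup>+ z. ennreal ((norm (x - james_stein (x + z)))^2) \<partial>std_gauss) =
      ennreal (K * (\<integral>y. (norm (x - james_stein y))^2 * exp (- ((norm (y - x))^2) / 2) \<partial>lborel))" .
  show ?thesis
  proof (cases "x = 0")
    case True
    have "K * (\<integral>y. (norm (x - james_stein y))^2 * exp (- ((norm (y - x))^2) / 2) \<partial>lborel) \<le> K * (2 * I0)"
      using RM(3)[OF True] K unfolding I0_def by (intro mult_left_mono) (auto simp: james_stein_def)
    also have "\<dots> = 2" using KI by (simp add: algebra_simps)
    finally have "ennreal (K * (\<integral>y. (norm (x - james_stein y))^2 * exp (- ((norm (y - x))^2) / 2) \<partial>lborel)) \<le> ennreal 2"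
      by (rule ennreal_leI)
    then show ?thesis using True eq by simp
  next
    case False
    have "K * (\<integral>y. (norm (x - james_stein y))^2 * exp (- ((norm (y - x))^2) / 2) \<partial>lborel) \<le> K * (real DIM(real^'n) * I0)"
      using RM(2) K unfolding I0_def by (intro mult_left_mono) (auto simp: james_stein_def)
    also have "\<dots> = real CARD('n)" using KI by (simp add: algebra_simps)
    finally show ?thesis using False eq by (simp add: ennreal_leI)
  qed
qed


theorem mainTheorem5:
  fixes eps :: real
  assumes "CARD('n::finite) > 2"
    and "0 \<le> eps" and "eps \<le> 1"
  shows "minimax_JS eps TYPE('n) \<le> ennreal (eps + 2 / real CARD('n))"
proof -
  define D where "D = real CARD('n)"
  have D: "D > 2" using assms(1) by (simp add: D_def)
  have risk: "js_risk \<nu> \<le> ennreal (2 + D * eps)" if "\<nu> \<in> (sparse_priors eps :: (real^'n) measure set)" for \<nu>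
  proof -
    have ps: "prob_space \<nu>" and sets: "sets \<nu> = sets borel" and m0: "measure \<nu> {0} \<ge> 1 - eps"
      using that by (auto simp: sparse_priors_def)
    interpret prob_space \<nu> by (rule ps)
    have sp: "space \<nu> = UNIV" using sets_eq_imp_space_eq[OF sets] by simp
    have A: "- {0::real^'n} \<in> sets \<nu>" using sets by simp
    have Z: "{0::real^'n} \<in> sets \<nu>" using sets by simp
    have "js_risk \<nu> \<le> (\<integral>\<^sup>+ x. (2 + ennreal D * indicator (- {0}) x) \<partial>\<nu>)"
      unfolding js_risk_def
    proof (rule nn_integral_mono)
      fix x :: "real^'n"
      have "(\<integral>\<^sup>+ z. ennreal ((norm (x - james_stein (x + z)))^2) \<partial>std_gauss)
          \<le> (if x = 0 then 2 else ennreal (real CARD('n)))" by (rule risk_point[OF assms(1)])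
      also have "\<dots> \<le> 2 + ennreal D * indicator (- {0}) x"
        by (auto simp: D_def)
      finally show "(\<integral>\<^sup>+ z. ennreal ((norm (x - james_stein (x + z)))^2) \<partial>std_gauss) \<le> 2 + ennreal D * indicator (- {0}) x" .
    qed
    also have "\<dots> = (\<integral>\<^sup>+ x. 2 \<partial>\<nu>) + (\<integral>\<^sup>+ x. ennreal D * indicator (- {0}) x \<partial>\<nu>)"
      by (rule nn_integral_add) (use A in auto)
    also have "\<dots> = 2 + ennreal D * emeasure \<nu> (- {0})"
      using A by (simp add: nn_integral_cmult_indicator emeasure_space_1)
    also have "emeasure \<nu> (- {0}) = ennreal (1 - measure \<nu> {0})"
    proof -
      have "- {0::real^'n} = space \<nu> - {0}" using sp by auto
      then show ?thesis using prob_compl[OF Z] by (simp add: emeasure_eq_measure)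
    qed
    also have "ennreal (1 - measure \<nu> {0}) \<le> ennreal eps" using m0 by (intro ennreal_leI) simp
    finally have "js_risk \<nu> \<le> 2 + ennreal D * ennreal eps" using D
      by (metis add_left_mono mult_left_mono order_trans zero_le)
    also have "\<dots> = ennreal (2 + D * eps)" using D assms(2) by (simp add: ennreal_mult ennreal_plus[symmetric])
    finally show ?thesis .
  qed
  have "minimax_JS eps TYPE('n) = ennreal (1 / D) * (SUP \<nu>\<in>(sparse_priors eps :: (real^'n) measure set). js_risk \<nu>)"
    by (simp add: minimax_JS_def D_def)
  also have "\<dots> \<le> ennreal (1 / D) * ennreal (2 + D * eps)"
    by (intro mult_left_mono SUP_least risk) auto
  also have "\<dots> = ennreal ((1 / D) * (2 + D * eps))"
    using D assms(2) by (subst ennreal_mult) auto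
  also have "(1 / D) * (2 + D * eps) = eps + 2 / real CARD('n)"
    using D by (simp add: D_def field_simps)
  finally show ?thesis .
qed


end
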